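(* Let $\mathbb{F}_2$ be the free group on $T_1,T_2$, $X=\{-1,1\}^{\mathbb{F}_2}$ with the product of uniform measures $m$ and the shift action $(gx)^h=x^{hg}$, and $X'=\{x\in X: gx\ne x$ for all $g\ne e\}$. Let $g_1,\dots,g_4$ be $T_1T_2^{-1},T_1^{-1}T_2,T_2T_1^{-1},T_2^{-1}T_1$ and $g_5,\dots,g_{16}$ the twelve distinct reduced-length-$4$ products of two of them. Let $K$ be the least number such that $X'$ can be partitioned into $K$ Borel sets $B_1,\dots,B_K$ with $x$ and $g_ix$ in different sets for all $i\le 16$, $x\in X'$; fix such a partition (each $B_j$ has positive measure) and put $\kappa(x)=j$ for $x\in B_j$. Let $N$ be an odd integer and $Q\subseteq X$ a Borel set with $m(Q)<1/512$ such that for every $x\in X'\setminus Q$ and every $j\le K$ there is $w\in\mathbb{F}_2$ of odd reduced length at most $N$ with $wx\in B_j$. For $x\in X$ let $t(x)=\{T_1x,T_2x\}$ if $x^e=1$ and $t(x)=\{T_1^{-1}x,T_2^{-1}x\}$ if $x^e=-1$. Let $Y=X\times\{1,2\}$ with measure $\tfrac12 m$ on each copy, $\mathbb{F}_2$ acting by $g(x,j)=(gx,j)$, and $\rho(x,1)=(x,2)$, $\rho(x,2)=(x,1)$; write $x$ for $(x,1)$. Define a graph on $Y$ with exactly the following edges: (a) distinct $x,y\in X'\setminus Q$ in the first copy are adjacent iff $t(x)\cap t(y)\ne\emptyset$; (b) for $x,y\in X'$, $\rho(x)$ and $\rho(y)$ are adjacent iff $y=wx$ for some $w$ of even reduced length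 at most $2N+10$ and $\kappa(y)\ne\kappa(x)$; (c) $x\in X'\setminus Q$ in the first copy is adjacent to $\rho(z)$ iff $z=wx$ for some $w$ of odd reduced length at most $N$ and $\kappa(z)\notin\kappa(t(x))$. Points of $Q$ in the first copy and points outside $X'$ have no other edges. Then proper vertex colouring of this graph with the colour set $\{1,\dots,K\}$ is paradoxical.
   Context: A colouring $c:Y\to\{1,\dots,K\}$ satisfies the proper colouring rule if for almost every vertex $v$, $c(v)\ne c(v')$ for all neighbours $v'$ of $v$. The rule is paradoxical if (a) some colouring (not necessarily measurable) satisfies it, and (b) there is no pair $(\mu,c)$ where $\mu$ is a finitely additive probability measure on an algebra $\mathcal{B}$ of subsets of $Y$, invariant under $\mathbb{F}_2$ and $\rho$, containing all measurable sets of the (completed) measure on $Y$ and extending it, and $c$ is a colouring satisfying the rule all of whose colour classes lie in $\mathcal{B}$. *)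

theory Defs
  imports "HOL-Probability.Probability"
begin

text \<open>A letter (i, s): i = False means T1, i = True means T2; s = True means the inverse.\<close>
type_synonym letter = "bool \<times> bool"

fun reduced :: "letter list \<Rightarrow> bool" where
  "reduced (a # b # w) = ((fst a = fst b \<longrightarrow> snd a = snd b) \<and> reduced (b # w))"
| "reduced _ = True"

typedef fg2 = "{w. reduced w}" morphisms word Abs_fg2
  by (rule exI[of _ "[]"]) simp

fun red_cons :: "letter \<Rightarrow> letter list \<Rightarrow> letter list" where
  "red_cons a [] = [a]"
| "red_cons a (b # w) = (if fst a = fst b \<and> snd a \<noteq> snd b then w else a # b # w)"

definition fmul :: "fg2 \<Rightarrow> fg2 \<Rightarrow> fg2" where
  "fmul g h = Abs_fg2 (foldr red_cons (word g) (word h))"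

definition finv :: "fg2 \<Rightarrow> fg2" where
  "finv g = Abs_fg2 (rev (map (\<lambda>(i, s). (i, \<not> s)) (word g)))"

definition fone :: fg2 where "fone = Abs_fg2 []"

definition T1 :: fg2 where "T1 = Abs_fg2 [(False, False)]"
definition T2 :: fg2 where "T2 = Abs_fg2 [(True, False)]"

definition rlen :: "fg2 \<Rightarrow> nat" where "rlen g = length (word g)"

definition G4 :: "fg2 set" where
  "G4 = {fmul T1 (finv T2), fmul (finv T1) T2, fmul T2 (finv T1), fmul (finv T2) T1}"

definition G16 :: "fg2 set" where
  "G16 = G4 \<union> {fmul a b | a b. a \<in> G4 \<and> b \<in> G4 \<and> rlen (fmul a b) = 4}"

section \<open>The space X = {-1,1}^F2 (encoded with bool: True = 1, False = -1)\<close>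

definition act :: "fg2 \<Rightarrow> (fg2 \<Rightarrow> bool) \<Rightarrow> (fg2 \<Rightarrow> bool)" where
  "act g x = (\<lambda>h. x (fmul h g))"

definition Xp :: "(fg2 \<Rightarrow> bool) set" where
  "Xp = {x. \<forall>g. g \<noteq> fone \<longrightarrow> act g x \<noteq> x}"

definition coin :: "bool measure" where
  "coin = measure_pmf (pmf_of_set (UNIV :: bool set))"

definition mX :: "(fg2 \<Rightarrow> bool) measure" where
  "mX = PiM (UNIV :: fg2 set) (\<lambda>_. coin)"

definition proper_partition :: "nat \<Rightarrow> (nat \<Rightarrow> (fg2 \<Rightarrow> bool) set) \<Rightarrow> bool" where
  "proper_partition k B \<longleftrightarrow>
     (\<forall>j\<in>{1..k}. B j \<in> sets mX) \<and>
     (\<forall>i\<in>{1..k}. \<forall>j\<in>{1..k}. i \<noteq> j \<longrightarrow> B i \<inter> B j = {}) \<and>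
     (\<Union>j\<in>{1..k}. B j) = Xp \<and>
     (\<forall>x\<in>Xp. \<forall>g\<in>G16. \<forall>j\<in>{1..k}. x \<in> B j \<longrightarrow> act g x \<notin> B j)"

definition kappa :: "nat \<Rightarrow> (nat \<Rightarrow> (fg2 \<Rightarrow> bool) set) \<Rightarrow> (fg2 \<Rightarrow> bool) \<Rightarrow> nat" where
  "kappa K B x = (THE j. j \<in> {1..K} \<and> x \<in> B j)"

definition tset :: "(fg2 \<Rightarrow> bool) \<Rightarrow> (fg2 \<Rightarrow> bool) set" where
  "tset x = (if x fone then {act T1 x, act T2 x} else {act (finv T1) x, act (finv T2) x})"

datatype sheet = S1 | S2

definition mY :: "((fg2 \<Rightarrow> bool) \<times> sheet) measure" where
  "mY = mX \<Otimes>\<^sub>M measure_pmf (pmf_of_set {S1, S2})"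

definition Yact :: "fg2 \<Rightarrow> (fg2 \<Rightarrow> bool) \<times> sheet \<Rightarrow> (fg2 \<Rightarrow> bool) \<times> sheet" where
  "Yact g v = (act g (fst v), snd v)"

definition rho :: "(fg2 \<Rightarrow> bool) \<times> sheet \<Rightarrow> (fg2 \<Rightarrow> bool) \<times> sheet" where
  "rho v = (fst v, (case snd v of S1 \<Rightarrow> S2 | S2 \<Rightarrow> S1))"

definition edge :: "nat \<Rightarrow> (nat \<Rightarrow> (fg2 \<Rightarrow> bool) set) \<Rightarrow> nat \<Rightarrow> (fg2 \<Rightarrow> bool) set
    \<Rightarrow> (fg2 \<Rightarrow> bool) \<times> sheet \<Rightarrow> (fg2 \<Rightarrow> bool) \<times> sheet \<Rightarrow> bool" where
  "edge K B N Q u v \<longleftrightarrow>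
     (\<exists>x y. u = (x, S1) \<and> v = (y, S1) \<and> x \<noteq> y \<and> x \<in> Xp - Q \<and> y \<in> Xp - Q \<and>
        tset x \<inter> tset y \<noteq> {}) \<or>
     (\<exists>x y. u = (x, S2) \<and> v = (y, S2) \<and> x \<in> Xp \<and> y \<in> Xp \<and>
        (\<exists>w. even (rlen w) \<and> rlen w \<le> 2 * N + 10 \<and> y = act w x) \<and>
        kappa K B y \<noteq> kappa K B x) \<or>
     (\<exists>x z. u = (x, S1) \<and> v = (z, S2) \<and> x \<in> Xp - Q \<and>
        (\<exists>w. odd (rlen w) \<and> rlen w \<le> N \<and> z = act w x) \<and>
        kappa K B z \<notin> kappa K B ` tset x)"

definition adj :: "nat \<Rightarrow> (nat \<Rightarrow> (fg2 \<Rightarrow> bool) set) \<Rightarrow> nat \<Rightarrow> (fg2 \<Rightarrow> bool) set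
    \<Rightarrow> (fg2 \<Rightarrow> bool) \<times> sheet \<Rightarrow> (fg2 \<Rightarrow> bool) \<times> sheet \<Rightarrow> bool" where
  "adj K B N Q u v \<longleftrightarrow> edge K B N Q u v \<or> edge K B N Q v u"

definition colouring :: "nat \<Rightarrow> ((fg2 \<Rightarrow> bool) \<times> sheet \<Rightarrow> nat) \<Rightarrow> bool" where
  "colouring K c \<longleftrightarrow> (\<forall>v. c v \<in> {1..K})"

definition satisfies_rule ::
  "((fg2 \<Rightarrow> bool) \<times> sheet \<Rightarrow> (fg2 \<Rightarrow> bool) \<times> sheet \<Rightarrow> bool) \<Rightarrow> ((fg2 \<Rightarrow> bool) \<times> sheet \<Rightarrow> nat) \<Rightarrow> bool" where
  "satisfies_rule E c \<longleftrightarrow> (AE v in completion mY. \<forall>v'. E v v' \<longrightarrow> c v \<noteq> c v')"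

definition inv_fa_extension ::
  "((fg2 \<Rightarrow> bool) \<times> sheet) set set \<Rightarrow> (((fg2 \<Rightarrow> bool) \<times> sheet) set \<Rightarrow> real) \<Rightarrow> bool" where
  "inv_fa_extension Bs mu \<longleftrightarrow>
     algebra UNIV Bs \<and>
     sets (completion mY) \<subseteq> Bs \<and>
     (\<forall>A\<in>sets (completion mY). mu A = measure (completion mY) A) \<and>
     (\<forall>A\<in>Bs. mu A \<ge> 0) \<and> mu UNIV = 1 \<and>
     (\<forall>A\<in>Bs. \<forall>C\<in>Bs. A \<inter> C = {} \<longrightarrow> mu (A \<union> C) = mu A + mu C) \<and>
     (\<forall>g. \<forall>A\<in>Bs. Yact g ` A \<in> Bs \<and> mu (Yact g ` A) = mu A) \<and>
     (\<forall>A\<in>Bs. rho ` A \<in> Bs \<and> mu (rho ` A) = mu A)"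

definition paradoxical ::
  "nat \<Rightarrow> ((fg2 \<Rightarrow> bool) \<times> sheet \<Rightarrow> (fg2 \<Rightarrow> bool) \<times> sheet \<Rightarrow> bool) \<Rightarrow> bool" where
  "paradoxical K E \<longleftrightarrow>
     (\<exists>c. colouring K c \<and> satisfies_rule E c) \<and>
     \<not> (\<exists>Bs mu c. inv_fa_extension Bs mu \<and> colouring K c \<and> satisfies_rule E c \<and>
            (\<forall>j. {v. c v = j} \<in> Bs))"

end

theory Submission
  imports Defs
begin

definition linv :: "letter \<Rightarrow> letter" where "linv a = (fst a, \<not> snd a)"

lemma linv_linv[simp]: "linv (linv a) = a" by (cases a) (simp add: linv_def)

lemma red_cons_Cons: "red_cons a (b # w) = (if b = linv a then w else a # b # w)"
  by (cases a; cases b) (auto simp: linv_def)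

lemma reduced_Cons2: "reduced (a # b # w) \<longleftrightarrow> b \<noteq> linv a \<and> reduced (b # w)"
  by (cases a; cases b) (auto simp: linv_def)

declare red_cons.simps(2)[simp del] reduced.simps(1)[simp del]
declare red_cons_Cons[simp] reduced_Cons2[simp]

lemma linv_neq[simp]: "linv a \<noteq> a" "a \<noteq> linv a" by (cases a; simp add: linv_def)+

lemma reduced_tl: "reduced (a # w) \<Longrightarrow> reduced w"
  by (cases w) (auto simp: reduced_Cons2)

lemma reduced_red_cons: "reduced w \<Longrightarrow> reduced (red_cons a w)"
proof (cases w)
  case (Cons b w')
  assume r: "reduced w"
  show ?thesis
  proof (cases "b = linv a")
    case True then show ?thesis using r Cons by (simp add: red_cons_Cons reduced_tl)
  next
    case False then show ?thesis using r Cons by (simp add: red_cons_Cons reduced_Cons2)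
  qed
qed simp

lemma reduced_foldr: "reduced w \<Longrightarrow> reduced (foldr red_cons u w)"
  by (induction u) (auto intro: reduced_red_cons)

lemma rc_rc_inv: "reduced v \<Longrightarrow> red_cons a (red_cons (linv a) v) = v"
proof (cases v)
  case Nil then show ?thesis by (simp add: red_cons_Cons)
next
  case (Cons b v')
  assume r: "reduced v"
  show ?thesis
  proof (cases "b = a")
    case True
    then show ?thesis using r Cons
      by (cases v') (auto simp: red_cons_Cons reduced_Cons2)
  next
    case False then show ?thesis using Cons by (simp add: red_cons_Cons)
  qed
qed

lemma red_cons_reduced: "reduced (a # w) \<Longrightarrow> red_cons a w = a # w"
  by (cases w) auto

lemma foldr_reduced_self: "reduced w \<Longrightarrow> foldr red_cons w [] = w"
proof (induction w)
  case (Cons a w)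
  then have IH: "foldr red_cons w [] = w" using reduced_tl by blast
  show ?case using Cons.prems by (simp add: IH red_cons_reduced)
qed simp

lemma foldr_reduce: "reduced w \<Longrightarrow> foldr red_cons u w = foldr red_cons (foldr red_cons u []) w"
proof (induction u)
  case (Cons a u)
  then have IH: "foldr red_cons u w = foldr red_cons (foldr red_cons u []) w" by blast
  let ?r = "foldr red_cons u []"
  show ?case
  proof (cases ?r)
    case Nil then show ?thesis using IH by simp
  next
    case (Cons b r')
    show ?thesis
    proof (cases "b = linv a")
      case True
      have "foldr red_cons (a # u) w = red_cons a (red_cons b (foldr red_cons r' w))"
        using IH Cons by simp
      also have "\<dots> = foldr red_cons r' w"
        using True rc_rc_inv[of "foldr red_cons r' w" a] reduced_foldr[OF Cons.prems] by simp
      finally show ?thesis using True Cons by simp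
    next
      case False then show ?thesis using IH Cons by (simp add: red_cons_Cons)
    qed
  qed
qed simp

lemma word_reduced[simp]: "reduced (word g)" using word by simp

lemma word_Abs[simp]: "reduced w \<Longrightarrow> word (Abs_fg2 w) = w"
  by (simp add: Abs_fg2_inverse)

lemma word_fmul: "word (fmul g h) = foldr red_cons (word g) (word h)"
  unfolding fmul_def by (simp add: reduced_foldr)

lemma fmul_assoc: "fmul (fmul g h) k = fmul g (fmul h k)"
proof -
  have "foldr red_cons (word g @ word h) (word k)
      = foldr red_cons (foldr red_cons (word g @ word h) []) (word k)"
    by (rule foldr_reduce) simp
  also have "foldr red_cons (word g @ word h) [] = foldr red_cons (word g) (word h)"
    by (simp add: foldr_reduced_self)
  finally have B: "foldr red_cons (word g @ word h) (word k)
     = foldr red_cons (foldr red_cons (word g) (word h)) (word k)" .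
  then show ?thesis by (simp add: word_fmul word_inject[symmetric])
qed

lemma fone_fmul[simp]: "fmul fone g = g"
  by (simp add: word_inject[symmetric] word_fmul fone_def)

lemma fmul_fone[simp]: "fmul g fone = g"
  by (simp add: word_inject[symmetric] word_fmul fone_def foldr_reduced_self)

lemma reduced_snoc: "reduced (w @ [a]) \<longleftrightarrow> reduced w \<and> (w = [] \<or> a \<noteq> linv (last w))"
proof (induction w)
  case (Cons b w)
  then show ?case
    by (cases w) (auto simp: reduced.simps)
qed simp

lemma reduced_rev_map: "reduced w \<Longrightarrow> reduced (rev (map linv w))"
proof (induction w)
  case (Cons a w)
  then have rw: "reduced w" using reduced_tl by blast
  then have IH: "reduced (rev (map linv w))" using Cons by blast
  show ?case
  proof (cases w)
    case Nil then show ?thesis by simp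
  next
    case (Cons b w')
    then have "b \<noteq> linv a" using Cons.prems by simp
    then have "linv a \<noteq> linv (last (rev (map linv w)))" using Cons by (auto simp: last_rev)
    then show ?thesis using IH by (simp add: reduced_snoc)
  qed
qed simp

lemma word_finv: "word (finv g) = rev (map linv (word g))"
proof -
  have "(\<lambda>(i, s). (i, \<not> s)) = linv" by (auto simp: linv_def)
  then show ?thesis unfolding finv_def by (simp add: reduced_rev_map)
qed

lemma foldr_inv_cancel: "reduced v \<Longrightarrow> foldr red_cons (rev (map linv u)) (foldr red_cons u v) = v"
proof (induction u)
  case (Cons a u)
  have "foldr red_cons (rev (map linv (a # u))) (foldr red_cons (a # u) v)
      = foldr red_cons (rev (map linv u)) (red_cons (linv a) (red_cons a (foldr red_cons u v)))"
    by simp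
  also have "red_cons (linv a) (red_cons a (foldr red_cons u v)) = foldr red_cons u v"
    using rc_rc_inv[of "foldr red_cons u v" "linv a"] reduced_foldr[OF Cons.prems] by simp
  finally show ?case using Cons by simp
qed simp

lemma finv_fmul[simp]: "fmul (finv g) g = fone"
proof -
  have "foldr red_cons (rev (map linv (word g))) (foldr red_cons (word g) []) = []"
    by (rule foldr_inv_cancel) simp
  then show ?thesis
    by (simp add: word_inject[symmetric] word_fmul fone_def word_finv foldr_reduced_self)
qed

lemma finv_finv[simp]: "finv (finv g) = g"
  by (simp add: word_inject[symmetric] word_finv rev_map comp_def)

lemma fmul_finv[simp]: "fmul g (finv g) = fone"
  using finv_fmul[of "finv g"] by simp

lemma fmul_cancel_left: "fmul g h = fmul g k \<Longrightarrow> h = k"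
  by (metis fmul_assoc finv_fmul fone_fmul)

lemma fmul_cancel_right: "fmul h g = fmul k g \<Longrightarrow> h = k"
  by (metis fmul_assoc fmul_finv fmul_fone)

lemma length_red_cons: "length (red_cons a w) \<le> length w + 1 \<and> even (length (red_cons a w) + length w + 1)"
  by (cases w) (auto simp: red_cons_Cons)

lemma par_aux: "(a::nat) \<le> b+1 \<Longrightarrow> even(a+b+1) \<Longrightarrow> b \<le> c \<Longrightarrow> even (b+c) \<Longrightarrow> a \<le> c+1 \<and> even(a+c+1)"
  by presburger

lemma length_foldr: "length (foldr red_cons u w) \<le> length u + length w \<and>
   even (length (foldr red_cons u w) + length u + length w)"
proof (induction u)
  case (Cons a u)
  then show ?case using length_red_cons[of a "foldr red_cons u w"]
      par_aux[of "length (red_cons a (foldr red_cons u w))" "length (foldr red_cons u w)" "length u + length w"]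
    by (simp add: add.assoc)
qed simp

lemma rlen_fmul: "rlen (fmul g h) \<le> rlen g + rlen h"
  using length_foldr unfolding rlen_def word_fmul by blast

lemma rlen_fmul_even: "even (rlen (fmul g h) + rlen g + rlen h)"
  using length_foldr unfolding rlen_def word_fmul by blast

lemma rlen_finv[simp]: "rlen (finv g) = rlen g"
  by (simp add: rlen_def word_finv)

lemma act_fone[simp]: "act fone x = x"
  by (simp add: act_def)

lemma act_act: "act g (act h x) = act (fmul g h) x"
  by (simp add: act_def fmul_assoc)

lemma Xp_act: "x \<in> Xp \<Longrightarrow> act g x \<in> Xp"
proof -
  assume x: "x \<in> Xp"
  show "act g x \<in> Xp"
  unfolding Xp_def
  proof (intro CollectI allI impI notI)
    fix h assume h: "h \<noteq> fone" and e: "act h (act g x) = act g x"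
    have "act (finv g) (act h (act g x)) = act (finv g) (act g x)" using e by simp
    then have "act (fmul (fmul (finv g) h) g) x = x"
      by (simp add: act_act fmul_assoc)
    moreover have "fmul (fmul (finv g) h) g \<noteq> fone"
    proof
      assume "fmul (fmul (finv g) h) g = fone"
      then have "fmul g (fmul (fmul (finv g) h) g) = fmul g fone" by simp
      then have "fmul h g = fmul fone g" by (simp add: fmul_assoc[symmetric])
      then show False using h fmul_cancel_right by blast
    qed
    ultimately show False using x unfolding Xp_def by blast
  qed
qed

lemma Xp_free: "x \<in> Xp \<Longrightarrow> act g x = act h x \<Longrightarrow> g = h"
proof -
  assume x: "x \<in> Xp" and e: "act g x = act h x"
  have "act (finv h) (act g x) = act (finv h) (act h x)" using e by simp
  then have "act (fmul (finv h) g) x = x" by (simp add: act_act fmul_assoc[symmetric])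
  then have "fmul (finv h) g = fone" using x unfolding Xp_def by blast
  then have "fmul h (fmul (finv h) g) = fmul h fone" by simp
  then show "g = h" by (simp add: fmul_assoc[symmetric])
qed

definition lt :: "letter \<Rightarrow> fg2" where "lt l = Abs_fg2 [l]"

lemma word_lt[simp]: "word (lt l) = [l]" by (simp add: lt_def)

lemma T1_lt: "T1 = lt (False, False)" by (simp add: T1_def lt_def)
lemma T2_lt: "T2 = lt (True, False)" by (simp add: T2_def lt_def)
lemma finv_lt: "finv (lt l) = lt (linv l)"
  by (simp add: word_inject[symmetric] word_finv)
lemma iT1_lt: "finv T1 = lt (False, True)" by (simp add: T1_lt finv_lt linv_def)
lemma iT2_lt: "finv T2 = lt (True, True)" by (simp add: T2_lt finv_lt linv_def)

lemma word_fmul_lt: "word (fmul (lt l) g) = red_cons l (word g)"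
  by (simp add: word_fmul)

lemma lt_inj: "lt l = lt l' \<longleftrightarrow> l = l'"
  by (metis word_lt list.inject)

lemma rlen_lt[simp]: "rlen (lt l) = 1" by (simp add: rlen_def)

lemma fone_word[simp]: "word fone = []" by (simp add: fone_def)

lemma G4_words: "G4 = Abs_fg2 ` {[(False,False),(True,True)], [(False,True),(True,False)],
   [(True,False),(False,True)], [(True,True),(False,False)]}"
  unfolding G4_def T1_lt T2_lt by (simp add: fmul_def linv_def finv_lt)

lemma G4_prod: "a \<in> G4 \<Longrightarrow> b \<in> G4 \<Longrightarrow> fmul a b = fone \<or> fmul a b \<in> G16"
proof -
  assume a: "a \<in> G4" and b: "b \<in> G4"
  have "fmul a b = fone \<or> rlen (fmul a b) = 4"
    using a b unfolding G4_words
    by (auto simp: fmul_def rlen_def fone_def linv_def word_inject[symmetric])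
  then show ?thesis using a b unfolding G16_def by blast
qed

lemma G4_sub: "G4 \<subseteq> G16" by (simp add: G16_def)

lemma Xp_nonfix: "x \<in> Xp \<Longrightarrow> g \<noteq> fone \<Longrightarrow> act g x \<noteq> x"
  unfolding Xp_def by blast


lemma countable_fg2: "countable (UNIV :: fg2 set)"
proof -
  have "UNIV = Abs_fg2 ` (UNIV :: letter list set)"
    by (metis Abs_fg2_cases surj_def UNIV_eq_I image_eqI iso_tuple_UNIV_I)
  moreover have "countable (UNIV :: letter list set)" by simp
  ultimately show ?thesis by (metis countable_image)
qed

lemma sets_coin[simp]: "sets coin = UNIV" by (simp add: coin_def)
lemma space_coin[simp]: "space coin = UNIV" by (simp add: coin_def)
lemma prob_coin: "prob_space coin" by (simp add: coin_def prob_space_measure_pmf)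

lemma space_mX[simp]: "space mX = UNIV"
  by (simp add: mX_def space_PiM)

lemma prob_mX: "prob_space mX"
  unfolding mX_def by (rule prob_space_PiM) (rule prob_coin)

interpretation PX: prob_space mX by (rule prob_mX)

lemma emeasure_coin: "emeasure coin A = card A / 2"
  unfolding coin_def by (subst emeasure_pmf_of_set) auto

lemma meas_comp: "(\<lambda>x. x h) \<in> measurable mX coin"
  unfolding mX_def by (rule measurable_component_singleton) simp

lemma meas_comp_set[measurable]: "{x. x h} \<in> sets mX"
proof -
  have "(\<lambda>x. x h) -` {True} \<inter> space mX \<in> sets mX"
    by (rule measurable_sets[OF meas_comp]) simp
  then show ?thesis by (simp add: vimage_def)
qed

lemma meas_eq_set: "{x. x a = x b} \<in> sets mX"
proof -
  have "{x. x a = x b} = ({x. x a} \<inter> {x. x b}) \<union> ((UNIV - {x. x a}) \<inter> (UNIV - {x. x b}))"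
    by auto
  also have "\<dots> \<in> sets mX" by (intro sets.Un sets.Int sets.Diff) (auto simp: sets.top[of mX, simplified])
  finally show ?thesis .
qed

lemma act_measurable: "act g \<in> measurable mX mX"
  unfolding act_def mX_def
  by (rule measurable_PiM_single') (auto intro: measurable_component_singleton simp: space_PiM)

lemma act_distr: "distr mX mX (act g) = mX"
proof -
  have "distr (Pi\<^sub>M UNIV (\<lambda>_. coin)) (\<Pi>\<^sub>M i\<in>UNIV. (\<lambda>_. coin) ((\<lambda>h. fmul h g) i)) (\<lambda>\<omega>. \<lambda>n\<in>UNIV. \<omega> ((\<lambda>h. fmul h g) n))
     = (\<Pi>\<^sub>M i\<in>UNIV. (\<lambda>_. coin) ((\<lambda>h. fmul h g) i))"
    by (rule distr_PiM_reindex) (auto simp: prob_coin inj_on_def dest: fmul_cancel_right)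
  moreover have R: "(\<lambda>\<omega>. \<lambda>n\<in>UNIV. \<omega> (fmul n g)) = (\<lambda>x h. x (fmul h g))"
    by (simp add: restrict_def)
  ultimately show ?thesis unfolding mX_def act_def by (simp only: R)
qed

lemma act_emeasure: "A \<in> sets mX \<Longrightarrow> emeasure mX (act g -` A) = emeasure mX A"
proof -
  assume A: "A \<in> sets mX"
  have "emeasure mX A = emeasure (distr mX mX (act g)) A" by (simp add: act_distr)
  also have "\<dots> = emeasure mX (act g -` A \<inter> space mX)"
    by (rule emeasure_distr[OF act_measurable A])
  finally show ?thesis by simp
qed

lemma act_vimage_sets: "A \<in> sets mX \<Longrightarrow> act g -` A \<in> sets mX"
  using measurable_sets[OF act_measurable, of A g] by simp

lemma cyl_eq: "prod_emb UNIV (\<lambda>_. coin) J (Pi\<^sub>E J A) = {x. \<forall>i\<in>J. x i \<in> A i}"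
  by (subst prod_emb_PiE) (auto simp: PiE_def Pi_def extensional_def)

lemma cyl_emeasure: "finite J \<Longrightarrow> emeasure mX {x. \<forall>i\<in>J. x i \<in> A i} = (\<Prod>i\<in>J. ennreal (card (A i) / 2))"
proof -
  assume J: "finite J"
  have "emeasure mX (prod_emb UNIV (\<lambda>_. coin) J (Pi\<^sub>E J A)) = (\<Prod>i\<in>J. emeasure coin (A i))"
    unfolding mX_def by (rule emeasure_PiM_emb) (auto simp: prob_coin J)
  then show ?thesis by (simp add: cyl_eq emeasure_coin)
qed

definition flip :: "fg2 \<Rightarrow> (fg2 \<Rightarrow> bool) \<Rightarrow> (fg2 \<Rightarrow> bool)" where
  "flip b x = x(b := \<not> x b)"

lemma Not_meas: "Not \<in> measurable coin coin" by (simp add: coin_def)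

lemma flip_t3: "i = b \<Longrightarrow> (\<lambda>x. if i = b then \<not> x b else x i) \<in> measurable mX coin"
proof -
  assume True: "i = b"
  have "Not \<circ> (\<lambda>x. x b) \<in> measurable mX coin"
    by (rule measurable_comp[OF meas_comp Not_meas])
  then show ?thesis using True by (simp add: comp_def)
qed

lemma flip_t4: "i \<noteq> b \<Longrightarrow> (\<lambda>x. if i = b then \<not> x b else x i) \<in> measurable mX coin"
  using meas_comp[of i] by simp

lemma flip_eq: "flip b = (\<lambda>x i. (if i = b then \<not> x b else x i))"
  by (auto simp: flip_def fun_eq_iff)

lemma flip_m: "(\<lambda>x i. (if i = b then \<not> x b else x i)) \<in> measurable mX (Pi\<^sub>M UNIV (\<lambda>_. coin))"
  apply (rule measurable_PiM_single'[where f="\<lambda>i x. if i = b then \<not> x b else x i"])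
  subgoal for i using flip_t3[of i b] flip_t4[of i b] by blast
  by (simp add: space_PiM)

lemma flip_measurable: "flip b \<in> measurable mX mX"
  using flip_m[of b] unfolding flip_eq[of b] by (simp only: mX_def)

lemma flip_app: "flip b x i = (if i = b then \<not> x b else x i)"
  by (simp add: flip_def)

lemma flip_distr: "distr mX mX (flip b) = mX"
proof (rule measure_eqI_PiM_infinite[of _ UNIV "\<lambda>_. coin"])
  show "sets (distr mX mX (flip b)) = sets (Pi\<^sub>M UNIV (\<lambda>_. coin))" by (simp add: mX_def)
  show "sets mX = sets (Pi\<^sub>M UNIV (\<lambda>_. coin))" by (simp add: mX_def)
  show "finite_measure (distr mX mX (flip b))"
    by (rule prob_space.finite_measure, rule PX.prob_space_distr[OF flip_measurable])
  fix A :: "fg2 \<Rightarrow> bool set" and J :: "fg2 set" assume J: "finite J"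
  define A' where "A' i = (if i = b then Not -` A i else A i)" for i
  have "flip b -` {x. \<forall>i\<in>J. x i \<in> A i} = {x. \<forall>i\<in>J. x i \<in> (if i = b then Not -` A i else A i)}"
    by (auto simp: flip_app)
  then have "flip b -` {x. \<forall>i\<in>J. x i \<in> A i} = {x. \<forall>i\<in>J. x i \<in> A' i}"
    by (simp only: A'_def)
  moreover have "card (A' i) = card (A i)" for i
  proof -
    have "Not -` A i = Not ` A i" by force
    moreover have "inj_on Not (A i)" by (auto simp: inj_on_def)
    ultimately have c: "card (Not -` A i) = card (A i)" by (simp add: card_image)
    show ?thesis unfolding A'_def using c by (cases "i = b") simp_all
  qed
  moreover have "{x. \<forall>i\<in>J. x i \<in> A i} \<in> sets mX"
  proof -
    have "prod_emb UNIV (\<lambda>_. coin) J (Pi\<^sub>E J A) \<in> sets (Pi\<^sub>M UNIV (\<lambda>_. coin))"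
      by (rule sets_PiM_I) (auto simp: J)
    then show ?thesis unfolding cyl_eq mX_def .
  qed
  ultimately show "emeasure (distr mX mX (flip b)) (prod_emb UNIV (\<lambda>_. coin) J (Pi\<^sub>E J A))
        = emeasure mX (prod_emb UNIV (\<lambda>_. coin) J (Pi\<^sub>E J A))"
  proof -
    assume pre: "flip b -` {x. \<forall>i\<in>J. x i \<in> A i} = {x. \<forall>i\<in>J. x i \<in> A' i}"
      and cd: "\<And>i. card (A' i) = card (A i)" and ms: "{x. \<forall>i\<in>J. x i \<in> A i} \<in> sets mX"
    have "emeasure (distr mX mX (flip b)) {x. \<forall>i\<in>J. x i \<in> A i}
        = emeasure mX (flip b -` {x. \<forall>i\<in>J. x i \<in> A i} \<inter> space mX)"
      by (rule emeasure_distr[OF flip_measurable ms])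
    also have "\<dots> = emeasure mX {x. \<forall>i\<in>J. x i \<in> A' i}" unfolding pre space_mX Int_UNIV_right ..
    also have "\<dots> = (\<Prod>i\<in>J. ennreal (card (A' i) / 2))" by (rule cyl_emeasure[OF J])
    also have "\<dots> = (\<Prod>i\<in>J. ennreal (card (A i) / 2))" unfolding cd ..
    also have "\<dots> = emeasure mX {x. \<forall>i\<in>J. x i \<in> A i}" by (rule cyl_emeasure[OF J, symmetric])
    finally show ?thesis unfolding cyl_eq .
  qed
qed

lemma flip_emeasure: "A \<in> sets mX \<Longrightarrow> emeasure mX (flip b -` A) = emeasure mX A"
proof -
  assume A: "A \<in> sets mX"
  have "emeasure mX A = emeasure (distr mX mX (flip b)) A" by (simp add: flip_distr)
  also have "\<dots> = emeasure mX (flip b -` A \<inter> space mX)"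
    by (rule emeasure_distr[OF flip_measurable A])
  finally show ?thesis by simp
qed

definition EP :: "(fg2 \<times> fg2) set \<Rightarrow> (fg2 \<Rightarrow> bool) set" where
  "EP P = {x. \<forall>(a,b)\<in>P. x a = x b}"

lemma EP_sets: "finite P \<Longrightarrow> EP P \<in> sets mX"
proof (induction P rule: finite_induct)
  case empty then show ?case by (simp add: EP_def sets.top[of mX, simplified])
next
  case (insert p P)
  obtain a b where p: "p = (a,b)" by (cases p)
  have "EP (insert p P) = {x. x a = x b} \<inter> EP P" by (auto simp: EP_def p)
  moreover have "{x. x a = x b} \<inter> EP P \<in> sets mX"
    by (rule sets.Int[OF meas_eq_set insert.IH])
  ultimately show ?case by simp
qed

lemma EP_alt: "x \<in> EP P \<longleftrightarrow> (\<forall>p\<in>P. x (fst p) = x (snd p))"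
  unfolding EP_def by (simp add: case_prod_beta)

lemma halve:
  assumes P: "finite P" and ab: "a \<noteq> b" and b: "b \<notin> fst ` P \<union> snd ` P"
  shows "2 * measure mX (EP (insert (a,b) P)) \<le> measure mX (EP P)"
proof -
  let ?E = "EP (insert (a,b) P)"
  let ?F = "flip b -` ?E"
  have P1: "fst p \<noteq> b" "snd p \<noteq> b" if "p \<in> P" for p using b that by force+
  have F: "?F = EP P \<inter> {x. x a \<noteq> x b}"
  proof (rule set_eqI)
    fix x
    have "(\<forall>p\<in>P. flip b x (fst p) = flip b x (snd p)) = (\<forall>p\<in>P. x (fst p) = x (snd p))"
      using P1 by (simp add: flip_app)
    moreover have "flip b x a = x a" "flip b x b = (\<not> x b)" using ab by (simp_all add: flip_app)
    moreover have "x \<in> ?F \<longleftrightarrow> (flip b x a = flip b x b \<and> (\<forall>p\<in>P. flip b x (fst p) = flip b x (snd p)))"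
      by (simp add: EP_alt)
    moreover have "x \<in> EP P \<inter> {x. x a \<noteq> x b} \<longleftrightarrow> (\<forall>p\<in>P. x (fst p) = x (snd p)) \<and> x a \<noteq> x b"
      by (simp add: EP_alt)
    ultimately show "x \<in> ?F \<longleftrightarrow> x \<in> EP P \<inter> {x. x a \<noteq> x b}"
      by auto
  qed
  have Es: "?E \<in> sets mX" using P by (simp add: EP_sets)
  have "?F = EP P - {x. x a = x b}" unfolding F by blast
  then have Fs: "?F \<in> sets mX" using sets.Diff[OF EP_sets[OF P] meas_eq_set[of a b]] by simp
  have mF: "measure mX ?F = measure mX ?E"
    using flip_emeasure[OF Es, of b] unfolding measure_def by simp
  have dj: "?E \<inter> ?F = {}" unfolding F EP_alt by (auto simp: EP_alt)
  have "measure mX (?E \<union> ?F) = measure mX ?E + measure mX ?F"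
    by (rule PX.finite_measure_Union[OF Es Fs dj])
  moreover have sub: "?E \<union> ?F \<subseteq> EP P" unfolding F by (auto simp: EP_alt)
  have "measure mX (?E \<union> ?F) \<le> measure mX (EP P)"
    by (rule PX.finite_measure_mono[OF sub EP_sets[OF P]])
  ultimately show ?thesis using mF by simp
qed

lemma reduced_rep: "reduced (replicate n (False, False))"
proof (induction n)
  case (Suc n)
  then show ?case by (cases n) (auto simp: linv_def)
qed simp

lemma fg2_infinite: "infinite (UNIV :: fg2 set)"
proof
  assume fin: "finite (UNIV :: fg2 set)"
  have "inj (\<lambda>n. Abs_fg2 (replicate n (False, False)))"
  proof (rule injI)
    fix m n assume "Abs_fg2 (replicate m (False, False)) = Abs_fg2 (replicate n (False, False))"
    then have "word (Abs_fg2 (replicate m (False, False))) = word (Abs_fg2 (replicate n (False, False)))"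
      by simp
    then have "replicate m (False, False) = replicate n (False, False)" by (simp add: reduced_rep)
    then show "m = n" by (metis length_replicate)
  qed
  moreover have "finite (range (\<lambda>n. Abs_fg2 (replicate n (False, False))))"
    using fin by (rule finite_subset[rotated]) simp
  ultimately have "finite (UNIV :: nat set)" using finite_imageD by blast
  then show False by simp
qed

definition Fix :: "fg2 \<Rightarrow> (fg2 \<Rightarrow> bool) set" where "Fix g = {x. act g x = x}"

lemma Fix_sets: "Fix g \<in> sets mX"
proof -
  have "Fix g = (\<Inter>h\<in>UNIV. {x. x (fmul h g) = x h})"
    by (auto simp: Fix_def act_def fun_eq_iff)
  also have "\<dots> \<in> sets mX"
    by (rule sets.countable_INT'') (auto simp: countable_fg2 meas_eq_set sets.top[of mX, simplified])
  finally show ?thesis .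
qed

lemma Fix_small:
  assumes g: "g \<noteq> fone"
  shows "\<exists>P. finite P \<and> Fix g \<subseteq> EP P \<and> measure mX (EP P) \<le> (1/2)^n"
proof (induction n)
  case 0
  show ?case by (rule exI[of _ "{}"]) (simp add: EP_def)
next
  case (Suc n)
  then obtain P where P: "finite P" "Fix g \<subseteq> EP P" "measure mX (EP P) \<le> (1/2)^n" by blast
  have "finite (fst ` P \<union> snd ` P)" using P by simp
  then obtain b where b: "b \<notin> fst ` P \<union> snd ` P"
    using fg2_infinite by (meson ex_new_if_finite)
  define a where "a = fmul b (finv g)"
  have ab: "a \<noteq> b"
  proof
    assume "a = b"
    then have "fmul b (finv g) = fmul b fone" by (simp add: a_def)
    then have "finv g = fone" by (rule fmul_cancel_left)
    then have "finv (finv g) = finv fone" by simp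
    moreover have "finv fone = fone" using finv_fmul[of fone] by simp
    ultimately show False using g by simp
  qed
  have "Fix g \<subseteq> EP (insert (a,b) P)"
  proof
    fix x assume x: "x \<in> Fix g"
    have "x a = act g x a" using x by (simp add: Fix_def)
    also have "\<dots> = x b" by (simp add: act_def a_def fmul_assoc)
    finally show "x \<in> EP (insert (a,b) P)" using x P(2) by (auto simp: EP_def)
  qed
  moreover have "measure mX (EP (insert (a,b) P)) \<le> (1/2)^Suc n"
    using halve[OF P(1) ab b] P(3) by simp
  ultimately show ?case using P(1) by blast
qed

lemma Fix_null: "g \<noteq> fone \<Longrightarrow> Fix g \<in> null_sets mX"
proof -
  assume g: "g \<noteq> fone"
  have le: "measure mX (Fix g) \<le> (1/2)^n" for n
  proof -
    obtain P where P: "finite P" "Fix g \<subseteq> EP P" "measure mX (EP P) \<le> (1/2)^n"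
      using Fix_small[OF g] by blast
    have "measure mX (Fix g) \<le> measure mX (EP P)"
      by (rule PX.finite_measure_mono[OF P(2) EP_sets[OF P(1)]])
    then show ?thesis using P(3) by simp
  qed
  have "measure mX (Fix g) = 0"
  proof (rule ccontr)
    assume "measure mX (Fix g) \<noteq> 0"
    then have "measure mX (Fix g) > 0" using measure_nonneg[of mX "Fix g"] by linarith
    then obtain n where "(1/2::real)^n < measure mX (Fix g)"
      using real_arch_pow_inv[of "measure mX (Fix g)" "1/2"] by auto
    then show False using le[of n] by linarith
  qed
  then show ?thesis using Fix_sets by (simp add: PX.emeasure_eq_measure null_sets_def)
qed

lemma Xp_eq: "Xp = UNIV - (\<Union>g\<in>{g. g \<noteq> fone}. Fix g)"
  by (auto simp: Xp_def Fix_def)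

lemma Xp_sets: "Xp \<in> sets mX"
  unfolding Xp_eq
  by (intro sets.Diff sets.countable_UN'') (auto simp: countable_fg2 Fix_sets sets.top[of mX, simplified]
      intro: countable_subset[OF subset_UNIV])

lemma Xp_measure: "measure mX Xp = 1"
proof -
  have N: "(\<Union>g\<in>{g. g \<noteq> fone}. Fix g) \<in> null_sets mX"
    by (rule null_sets_UN') (auto simp: Fix_null intro: countable_subset[OF subset_UNIV countable_fg2])
  then have "measure mX (UNIV - (\<Union>g\<in>{g. g \<noteq> fone}. Fix g)) = 1 - 0"
    using PX.prob_compl[of "\<Union>g\<in>{g. g \<noteq> fone}. Fix g"]
    by (simp add: null_sets_def PX.emeasure_eq_measure)
  then show ?thesis unfolding Xp_eq by simp
qed

lemma Xp_nonempty: "Xp \<noteq> {}"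
  using Xp_measure by auto


definition D0 :: "(fg2 \<Rightarrow> bool) set" where
  "D0 = {z. \<not> z (finv T1) \<and> \<not> z (finv T2) \<and> z T1 \<and> z T2}"

lemma AL_distinct: "T1 \<noteq> T2" "T1 \<noteq> finv T1" "T1 \<noteq> finv T2" "T2 \<noteq> finv T1" "T2 \<noteq> finv T2"
  "finv T1 \<noteq> finv T2"
  by (simp_all add: T1_lt T2_lt finv_lt lt_inj linv_def)

lemma D0_measure: "measure mX D0 = 1/16"
proof -
  define J where "J = {finv T1, finv T2, T1, T2}"
  define A where "A i = (if i = T1 \<or> i = T2 then {True} else {False})" for i
  have eq: "D0 = {x. \<forall>i\<in>J. x i \<in> A i}"
    using AL_distinct by (auto simp: D0_def J_def A_def)
  have fin: "finite J" by (simp add: J_def)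
  have "emeasure mX D0 = (\<Prod>i\<in>J. ennreal (card (A i) / 2))"
    unfolding eq by (rule cyl_emeasure[OF fin])
  also have "\<dots> = (\<Prod>i\<in>J. ennreal (1/2))"
  proof -
    have "\<And>i. ennreal (card (A i) / 2) = ennreal (1/2)" by (simp add: A_def)
    then show ?thesis by (simp only:)
  qed
  also have "\<dots> = ennreal (1/2) ^ 4"
  proof -
    have "card J = 4" using AL_distinct by (simp add: J_def)
    then show ?thesis by simp
  qed
  also have "\<dots> = ennreal ((1/2)^4)" by (rule ennreal_power) simp
  also have "((1/2::real)^4) = 1/16" by (simp add: power_divide)
  finally show ?thesis by (simp add: PX.emeasure_eq_measure)
qed

lemma D0_sets: "D0 \<in> sets mX"
proof -
  have "D0 = (UNIV - {x. x (finv T1)}) \<inter> (UNIV - {x. x (finv T2)}) \<inter> {x. x T1} \<inter> {x. x T2}"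
    by (auto simp: D0_def)
  also have "\<dots> \<in> sets mX"
    by (intro sets.Int sets.Diff meas_comp_set) (simp add: sets.top[of mX, simplified])+
  finally show ?thesis .
qed

lemma compl_D0_measure: "measure mX (UNIV - D0) = 15/16"
  using PX.prob_compl[OF D0_sets] D0_measure by simp

lemma prob_pmf2: "prob_space (measure_pmf (pmf_of_set {S1, S2}))"
  by (rule prob_space_measure_pmf)

lemma prob_mY: "prob_space mY"
  unfolding mY_def by (rule prob_space_pair) (rule prob_mX, rule prob_pmf2)

interpretation PY: prob_space mY by (rule prob_mY)

lemma space_mY[simp]: "space mY = UNIV"
  by (simp add: mY_def space_pair_measure)

lemma pmf2_S: "emeasure (measure_pmf (pmf_of_set {S1, S2})) {s} = ennreal (1/2)"
proof -
  have "emeasure (measure_pmf (pmf_of_set {S1, S2})) {s} = card ({S1, S2} \<inter> {s}) / card {S1, S2}"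
    by (rule emeasure_pmf_of_set) auto
  also have "\<dots> = ennreal (1/2)" by (cases s) (simp_all add: divide_ennreal)
  finally show ?thesis .
qed

lemma Sh_sets: "A \<in> sets mX \<Longrightarrow> A \<times> {s} \<in> sets mY"
  unfolding mY_def by (rule pair_measureI) auto

lemma Sh_emeasure: "A \<in> sets mX \<Longrightarrow> emeasure mY (A \<times> {s}) = emeasure mX A * ennreal (1/2)"
  unfolding mY_def
  by (subst measure_pmf.emeasure_pair_measure_Times) (auto simp: pmf2_S)

lemma Sh_measure: "A \<in> sets mX \<Longrightarrow> measure mY (A \<times> {s}) = measure mX A / 2"
proof -
  assume A: "A \<in> sets mX"
  have "ennreal (measure mY (A \<times> {s})) = ennreal (measure mX A) * ennreal (1/2)"
    using Sh_emeasure[OF A, of s] by (simp add: PY.emeasure_eq_measure PX.emeasure_eq_measure)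
  also have "\<dots> = ennreal (measure mX A * (1/2))" by (rule ennreal_mult[symmetric]) auto
  finally have "measure mY (A \<times> {s}) = measure mX A * (1/2)"
    by (subst (asm) ennreal_inj) auto
  then show ?thesis by simp
qed

lemma section_sets: "Nn \<in> sets mY \<Longrightarrow> {x. (x, s) \<in> Nn} \<in> sets mX"
proof -
  assume N: "Nn \<in> sets mY"
  have "(\<lambda>x. (x, s)) \<in> measurable mX mY"
    unfolding mY_def by (rule measurable_Pair2') simp
  from measurable_sets[OF this N] show ?thesis by (simp add: vimage_def)
qed

lemma section_null: "Nn \<in> sets mY \<Longrightarrow> emeasure mY Nn = 0 \<Longrightarrow> {x. (x, s) \<in> Nn} \<in> null_sets mX"
proof -
  assume N: "Nn \<in> sets mY" and z: "emeasure mY Nn = 0"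
  let ?A = "{x. (x, s) \<in> Nn}"
  have A: "?A \<in> sets mX" by (rule section_sets[OF N])
  have "emeasure mY (?A \<times> {s}) \<le> emeasure mY Nn"
    by (rule emeasure_mono) (auto simp: N)
  then have "emeasure mX ?A * ennreal (1/2) = 0" using z Sh_emeasure[OF A, of s] by simp
  then have "emeasure mX ?A = 0" by simp
  then show ?thesis using A by (simp add: null_sets_def)
qed


lemma kappa_eq:
  assumes part: "proper_partition K B" and x: "x \<in> B j" and j: "j \<in> {1..K}"
  shows "kappa K B x = j"
  unfolding kappa_def
proof (rule the_equality)
  show "j \<in> {1..K} \<and> x \<in> B j" using x j by simp
  fix i assume "i \<in> {1..K} \<and> x \<in> B i"
  then show "i = j" using part x j unfolding proper_partition_def by blast
qed

lemma kappa_Xp: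
  assumes part: "proper_partition K B" and x: "x \<in> Xp"
  shows "kappa K B x \<in> {1..K} \<and> x \<in> B (kappa K B x)"
proof -
  obtain j where j: "j \<in> {1..K}" "x \<in> B j" using part x unfolding proper_partition_def by blast
  then show ?thesis using kappa_eq[OF part j(2) j(1)] by simp
qed

lemma kappa_G16:
  assumes part: "proper_partition K B" and x: "x \<in> Xp" and g: "g \<in> G16"
  shows "kappa K B (act g x) \<noteq> kappa K B x"
proof
  assume e: "kappa K B (act g x) = kappa K B x"
  have gx: "act g x \<in> Xp" using x by (rule Xp_act)
  have "act g x \<in> B (kappa K B x)" using kappa_Xp[OF part gx] e by simp
  moreover have "x \<in> B (kappa K B x)" "kappa K B x \<in> {1..K}" using kappa_Xp[OF part x] by auto
  ultimately show False using part x g unfolding proper_partition_def by blast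
qed

definition L :: "(fg2 \<Rightarrow> bool) \<Rightarrow> fg2 set" where
  "L x = (if x fone then {T1, T2} else {finv T1, finv T2})"

lemma tset_L: "tset x = (\<lambda>a. act a x) ` L x"
  by (simp add: tset_def L_def)

lemma L_rlen: "a \<in> L x \<Longrightarrow> rlen a = 1"
  by (auto simp: L_def T1_lt T2_lt finv_lt split: if_splits)

lemma L_G4: "a \<in> L x \<Longrightarrow> b \<in> L x \<Longrightarrow> a \<noteq> b \<Longrightarrow> fmul b (finv a) \<in> G4"
  by (auto simp: L_def G4_def split: if_splits)

lemma L_rel: "a \<in> L x \<Longrightarrow> b \<in> L x \<Longrightarrow> act b x = act a x \<or> (\<exists>g\<in>G4. act b x = act g (act a x))"
proof -
  assume a: "a \<in> L x" and b: "b \<in> L x"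
  show ?thesis
  proof (cases "a = b")
    case False
    have "act b x = act (fmul b (finv a)) (act a x)" by (simp add: act_act fmul_assoc)
    then show ?thesis using L_G4[OF a b False] by blast
  qed simp
qed

definition orb :: "(fg2 \<Rightarrow> bool) \<Rightarrow> (fg2 \<Rightarrow> bool) set" where
  "orb x = range (\<lambda>g. act g x)"

lemma orb_act: "orb (act h x) = orb x"
proof (rule set_eqI)
  fix y
  show "y \<in> orb (act h x) \<longleftrightarrow> y \<in> orb x"
  proof
    assume "y \<in> orb (act h x)"
    then obtain g where "y = act g (act h x)" unfolding orb_def by blast
    then have "y = act (fmul g h) x" by (simp add: act_act)
    then show "y \<in> orb x" unfolding orb_def by (rule range_eqI)
  next
    assume "y \<in> orb x"
    then obtain g where "y = act g x" unfolding orb_def by blast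
    then have "y = act (fmul g (finv h)) (act h x)" by (simp add: act_act fmul_assoc)
    then show "y \<in> orb (act h x)" unfolding orb_def by (rule range_eqI)
  qed
qed

definition rep :: "(fg2 \<Rightarrow> bool) \<Rightarrow> (fg2 \<Rightarrow> bool)" where
  "rep x = (SOME y. y \<in> orb x)"

lemma rep_orb: "rep x \<in> orb x"
  unfolding rep_def by (rule someI[of _ x]) (auto simp: orb_def intro: range_eqI[of _ _ fone])

lemma rep_act: "rep (act h x) = rep x"
  by (simp add: rep_def orb_act)

definition pos :: "(fg2 \<Rightarrow> bool) \<Rightarrow> fg2" where
  "pos x = (SOME g. act g (rep x) = x)"

lemma pos_rep: "act (pos x) (rep x) = x"
proof -
  obtain h where h: "rep x = act h x" using rep_orb[of x] by (auto simp: orb_def)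
  have "act (finv h) (rep x) = x" by (simp add: h act_act)
  then show ?thesis unfolding pos_def by (rule someI)
qed

lemma rep_Xp: "x \<in> Xp \<Longrightarrow> rep x \<in> Xp"
  using rep_orb[of x] by (auto simp: orb_def intro: Xp_act)

definition sl :: "(fg2 \<Rightarrow> bool) \<Rightarrow> letter" where
  "sl x = (if word (pos x) \<noteq> [] \<and> hd (word (pos x)) = linv (False, \<not> x fone)
           then (True, \<not> x fone) else (False, \<not> x fone))"

definition sx :: "(fg2 \<Rightarrow> bool) \<Rightarrow> (fg2 \<Rightarrow> bool)" where
  "sx x = act (lt (sl x)) x"

lemma sl_L: "lt (sl x) \<in> L x"
  by (auto simp: sl_def L_def T1_lt T2_lt finv_lt linv_def)

lemma sx_tset: "sx x \<in> tset x"
  using sl_L[of x] by (auto simp: sx_def tset_L)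

lemma word_sl: "word (fmul (lt (sl x)) (pos x)) = sl x # word (pos x)"
proof -
  have "word (pos x) = [] \<or> hd (word (pos x)) \<noteq> linv (sl x)"
    by (auto simp: sl_def linv_def)
  then show ?thesis
    by (cases "word (pos x)") (auto simp: word_fmul_lt)
qed

lemma sx_eq: "sx x = act (fmul (lt (sl x)) (pos x)) (rep x)"
  by (metis sx_def act_act pos_rep)

lemma sx_inj:
  assumes x: "x \<in> Xp" and r: "rep x = rep y" and e: "sx x = sx y"
  shows "x = y"
proof -
  have rX: "rep x \<in> Xp" using x by (rule rep_Xp)
  have "act (fmul (lt (sl x)) (pos x)) (rep x) = act (fmul (lt (sl y)) (pos y)) (rep x)"
    using e r sx_eq[of x] sx_eq[of y] by simp
  then have "fmul (lt (sl x)) (pos x) = fmul (lt (sl y)) (pos y)" by (rule Xp_free[OF rX])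
  then have "sl x # word (pos x) = sl y # word (pos y)" using word_sl[of x] word_sl[of y] by simp
  then have "pos x = pos y" by (simp add: word_inject)
  then show ?thesis using pos_rep[of x] pos_rep[of y] r by metis
qed

lemma tset_rep: "z \<in> tset x \<Longrightarrow> z \<in> tset y \<Longrightarrow> rep x = rep y"
  unfolding tset_L by (metis imageE rep_act)

lemma part_a:
  assumes part: "proper_partition K B" and x: "x \<in> Xp" and y: "y \<in> Xp" and xy: "x \<noteq> y"
    and t: "tset x \<inter> tset y \<noteq> {}"
  shows "kappa K B (sx x) \<noteq> kappa K B (sx y)"
proof -
  obtain z where zx: "z \<in> tset x" and zy: "z \<in> tset y" using t by blast
  have r: "rep x = rep y" using tset_rep[OF zx zy] .
  have ne: "sx x \<noteq> sx y" using sx_inj[OF x r] xy by blast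
  have sxX: "sx x \<in> Xp" using x by (simp add: sx_def Xp_act)
  obtain a where a: "a \<in> L x" "z = act a x" using zx by (auto simp: tset_L)
  obtain b where b: "b \<in> L y" "z = act b y" using zy by (auto simp: tset_L)
  have rel1: "z = sx x \<or> (\<exists>g\<in>G4. z = act g (sx x))"
    using L_rel[OF sl_L a(1)] a(2) by (auto simp: sx_def)
  have rel2: "sx y = z \<or> (\<exists>h\<in>G4. sx y = act h z)"
    using L_rel[OF b(1) sl_L] b(2) by (auto simp: sx_def)
  have "\<exists>k. sx y = act k (sx x) \<and> (k = fone \<or> k \<in> G16)"
  proof (cases "z = sx x")
    case True
    show ?thesis
    proof (cases "sx y = z")
      case True2: True
      then show ?thesis using True by (intro exI[of _ fone]) simp
    next
      case False
      then obtain h where "h \<in> G4" "sx y = act h z" using rel2 by blast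
      then show ?thesis using True G4_sub by blast
    qed
  next
    case False
    then obtain g where g: "g \<in> G4" "z = act g (sx x)" using rel1 by blast
    show ?thesis
    proof (cases "sx y = z")
      case True
      then show ?thesis using g G4_sub by blast
    next
      case False
      then obtain h where h: "h \<in> G4" "sx y = act h z" using rel2 by blast
      then have "sx y = act (fmul h g) (sx x)" using g by (simp add: act_act)
      moreover have "fmul h g = fone \<or> fmul h g \<in> G16" using G4_prod[OF h(1) g(1)] .
      ultimately show ?thesis by blast
    qed
  qed
  then obtain k where k: "sx y = act k (sx x)" "k = fone \<or> k \<in> G16" by blast
  have "k \<noteq> fone" using k(1) ne by auto
  then have "k \<in> G16" using k(2) by blast
  then show ?thesis using kappa_G16[OF part sxX] k(1) by metis
qed


definition c0 :: "nat \<Rightarrow> (nat \<Rightarrow> (fg2 \<Rightarrow> bool) set) \<Rightarrow> (fg2 \<Rightarrow> bool) \<times> sheet \<Rightarrow> nat" where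
  "c0 K B v = (if fst v \<in> Xp then (case snd v of S1 \<Rightarrow> kappa K B (sx (fst v)) | S2 \<Rightarrow> kappa K B (fst v)) else 1)"

lemma sx_Xp: "x \<in> Xp \<Longrightarrow> sx x \<in> Xp" by (simp add: sx_def Xp_act)

lemma c0_edge:
  assumes part: "proper_partition K B" and e: "edge K B N Q u v"
  shows "c0 K B u \<noteq> c0 K B v"
  using e unfolding edge_def
proof (elim disjE exE conjE)
  fix x y assume u: "u = (x, S1)" and v: "v = (y, S1)" and xy: "x \<noteq> y" and x: "x \<in> Xp - Q"
    and y: "y \<in> Xp - Q" and t: "tset x \<inter> tset y \<noteq> {}"
  show ?thesis using part_a[OF part _ _ xy t] x y by (simp add: u v c0_def)
next
  fix x y w assume u: "u = (x, S2)" and v: "v = (y, S2)" and x: "x \<in> Xp" and y: "y \<in> Xp"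
    and k: "kappa K B y \<noteq> kappa K B x"
  show ?thesis using x y k by (simp add: u v c0_def)
next
  fix x z w assume u: "u = (x, S1)" and v: "v = (z, S2)" and x: "x \<in> Xp - Q"
    and z: "z = act w x" and k: "kappa K B z \<notin> kappa K B ` tset x"
  have zX: "z \<in> Xp" using x z Xp_act by simp
  have "kappa K B (sx x) \<in> kappa K B ` tset x" using sx_tset by blast
  then show ?thesis using x zX k by (auto simp: u v c0_def)
qed

lemma part_a_exists:
  assumes part: "proper_partition K B"
  shows "\<exists>c. colouring K c \<and> satisfies_rule (adj K B N Q) c"
proof (intro exI conjI)
  obtain x0 where x0: "x0 \<in> Xp" using Xp_nonempty by blast
  have K1: "1 \<le> K" using kappa_Xp[OF part x0] by simp
  show "colouring K (c0 K B)"
    unfolding colouring_def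
  proof
    fix v :: "(fg2 \<Rightarrow> bool) \<times> sheet"
    show "c0 K B v \<in> {1..K}"
    proof (cases "fst v \<in> Xp")
      case True
      then show ?thesis using kappa_Xp[OF part True] kappa_Xp[OF part sx_Xp[OF True]]
        by (cases "snd v") (simp_all add: c0_def)
    next
      case False then show ?thesis using K1 by (simp add: c0_def)
    qed
  qed
  show "satisfies_rule (adj K B N Q) (c0 K B)"
    unfolding satisfies_rule_def
  proof (rule AE_I2)
    fix v
    show "\<forall>v'. adj K B N Q v v' \<longrightarrow> c0 K B v \<noteq> c0 K B v'"
      using c0_edge[OF part] unfolding adj_def by metis
  qed
qed


lemma fa_alg: "inv_fa_extension Bs mu \<Longrightarrow> algebra UNIV Bs"
  by (simp add: inv_fa_extension_def)

lemma fa_sets: "inv_fa_extension Bs mu \<Longrightarrow> A \<in> sets mY \<Longrightarrow> A \<in> Bs"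
  unfolding inv_fa_extension_def by (meson sets_completionI_sets subsetD)

lemma fa_meas: "inv_fa_extension Bs mu \<Longrightarrow> A \<in> sets mY \<Longrightarrow> mu A = measure mY A"
  unfolding inv_fa_extension_def by simp

lemma fa_add: "inv_fa_extension Bs mu \<Longrightarrow> A \<in> Bs \<Longrightarrow> C \<in> Bs \<Longrightarrow> A \<inter> C = {} \<Longrightarrow> mu (A \<union> C) = mu A + mu C"
  unfolding inv_fa_extension_def by blast

lemma fa_empty: "inv_fa_extension Bs mu \<Longrightarrow> mu {} = 0"
proof -
  assume f: "inv_fa_extension Bs mu"
  have "{} \<in> Bs" using fa_alg[OF f] by (simp add: algebra_iff_Un ring_of_sets_iff)
  then have "mu ({} \<union> {}) = mu {} + mu {}" using fa_add[OF f] by blast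
  then show ?thesis by simp
qed

lemma fa_mono: "inv_fa_extension Bs mu \<Longrightarrow> A \<in> Bs \<Longrightarrow> C \<in> Bs \<Longrightarrow> A \<subseteq> C \<Longrightarrow> mu A \<le> mu C"
proof -
  assume f: "inv_fa_extension Bs mu" and A: "A \<in> Bs" and C: "C \<in> Bs" and AC: "A \<subseteq> C"
  interpret algebra UNIV Bs by (rule fa_alg[OF f])
  have D: "C - A \<in> Bs" using A C by blast
  have "mu C = mu (A \<union> (C - A))" using AC by (simp add: Un_absorb1 Un_Diff_cancel)
  also have "\<dots> = mu A + mu (C - A)" by (rule fa_add[OF f A D]) blast
  finally show ?thesis using f D unfolding inv_fa_extension_def by force
qed

lemma fa_sum:
  assumes f: "inv_fa_extension Bs mu" and I: "finite I"
  shows "(\<forall>i\<in>I. A i \<in> Bs) \<Longrightarrow> disjoint_family_on A I \<Longrightarrow> mu (\<Union>i\<in>I. A i) = (\<Sum>i\<in>I. mu (A i))"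
  using I
proof (induction I rule: finite_induct)
  case empty then show ?case using fa_empty[OF f] by simp
next
  case (insert i I)
  interpret algebra UNIV Bs by (rule fa_alg[OF f])
  have U: "(\<Union>j\<in>I. A j) \<in> Bs" using insert.prems insert.hyps by (intro finite_UN) auto
  have dj: "A i \<inter> (\<Union>j\<in>I. A j) = {}"
    using insert.prems(2) insert.hyps unfolding disjoint_family_on_def by auto
  have IH: "mu (\<Union>j\<in>I. A j) = (\<Sum>j\<in>I. mu (A j))"
    using insert.prems insert.IH by (auto simp: disjoint_family_on_def)
  have "mu (\<Union>j\<in>insert i I. A j) = mu (A i \<union> (\<Union>j\<in>I. A j))" by simp
  also have "\<dots> = mu (A i) + mu (\<Union>j\<in>I. A j)"
    by (rule fa_add[OF f _ U dj]) (use insert.prems in auto)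
  finally show ?case using IH insert.hyps by simp
qed

lemma fa_Yact: "inv_fa_extension Bs mu \<Longrightarrow> A \<in> Bs \<Longrightarrow> Yact g ` A \<in> Bs \<and> mu (Yact g ` A) = mu A"
  unfolding inv_fa_extension_def by blast

lemma fa_rho: "inv_fa_extension Bs mu \<Longrightarrow> A \<in> Bs \<Longrightarrow> rho ` A \<in> Bs"
  unfolding inv_fa_extension_def by blast


locale PBctx =
  fixes K N :: nat and B :: "nat \<Rightarrow> (fg2 \<Rightarrow> bool) set" and Q :: "(fg2 \<Rightarrow> bool) set"
    and Bs :: "((fg2 \<Rightarrow> bool) \<times> sheet) set set" and mu :: "((fg2 \<Rightarrow> bool) \<times> sheet) set \<Rightarrow> real"
    and c :: "(fg2 \<Rightarrow> bool) \<times> sheet \<Rightarrow> nat"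
  assumes part: "proper_partition K B"
    and Qmeas: "Q \<in> sets mX"
    and Qsmall: "measure mX Q < 1 / 512"
    and reach: "\<forall>x\<in>Xp - Q. \<forall>j\<in>{1..K}. \<exists>w. odd (rlen w) \<and> rlen w \<le> N \<and> act w x \<in> B j"
    and fa: "inv_fa_extension Bs mu" and col: "colouring K c"
    and sat: "satisfies_rule (adj K B N Q) c"
    and cls: "\<forall>j. {v. c v = j} \<in> Bs"
begin

definition good :: "(fg2 \<Rightarrow> bool) \<times> sheet \<Rightarrow> bool" where
  "good v \<longleftrightarrow> (\<forall>v'. adj K B N Q v v' \<longrightarrow> c v \<noteq> c v')"

lemma good_adj: "good v \<Longrightarrow> adj K B N Q v v' \<Longrightarrow> c v \<noteq> c v'"
  unfolding good_def by blast

lemma col_in: "c v \<in> {1..K}" using col unfolding colouring_def by blast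

lemma edgeB:
  assumes x: "x \<in> Xp" and y: "y = act w x" and w: "even (rlen w)" "rlen w \<le> 2 * N + 10"
    and k: "kappa K B y \<noteq> kappa K B x"
  shows "adj K B N Q (x, S2) (y, S2)"
proof -
  have yX: "y \<in> Xp" using x y Xp_act by simp
  show ?thesis unfolding adj_def edge_def
    apply (rule disjI1, rule disjI2, rule disjI1)
    apply (rule exI[of _ x], rule exI[of _ y])
    using x yX y w k by blast
qed

lemma edgeC:
  assumes x: "x \<in> Xp - Q" and z: "z = act w x" and w: "odd (rlen w)" "rlen w \<le> N"
    and k: "kappa K B z \<notin> kappa K B ` tset x"
  shows "adj K B N Q (x, S1) (z, S2)"
  unfolding adj_def edge_def
  apply (rule disjI1, rule disjI2, rule disjI2)
  apply (rule exI[of _ x], rule exI[of _ z])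
  using x z w k by blast

lemma edgeA:
  assumes "x \<in> Xp - Q" "y \<in> Xp - Q" "x \<noteq> y" "tset x \<inter> tset y \<noteq> {}"
  shows "adj K B N Q (x, S1) (y, S1)"
  unfolding adj_def edge_def
  apply (rule disjI1, rule disjI1)
  apply (rule exI[of _ x], rule exI[of _ y])
  using assms by blast

lemma parity1: "odd (rlen a) \<Longrightarrow> odd (rlen b) \<Longrightarrow> even (rlen (fmul a (finv b)))"
  using rlen_fmul_even[of a "finv b"] by simp

lemma pigeon:
  assumes x: "x \<in> Xp - Q" and g: "\<And>w. good (act w x, S2)"
  shows "\<exists>a\<in>L x. c (x, S1) = c (act a x, S2) \<or> \<not> good (x, S1)"
proof -
  have "\<forall>j\<in>{1..K}. \<exists>w. odd (rlen w) \<and> rlen w \<le> N \<and> act w x \<in> B j" using reach x by blast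
  from bchoice[OF this] obtain W where W': "\<forall>j\<in>{1..K}. odd (rlen (W j)) \<and> rlen (W j) \<le> N \<and> act (W j) x \<in> B j"
    by blast
  have W: "\<And>j. j \<in> {1..K} \<Longrightarrow> odd (rlen (W j)) \<and> rlen (W j) \<le> N \<and> act (W j) x \<in> B j"
    using W' by blast
  define z where "z j = act (W j) x" for j
  have kz: "kappa K B (z j) = j" if "j \<in> {1..K}" for j
    using kappa_eq[OF part _ that] W[OF that] by (simp add: z_def)
  have xX: "x \<in> Xp" using x by simp
  have zX: "z j \<in> Xp" for j using Xp_act[OF xX] by (simp add: z_def)
  define colf where "colf j = c (z j, S2)" for j
  have inj: "inj_on colf {1..K}"
  proof (rule inj_onI)
    fix i j assume i: "i \<in> {1..K}" and j: "j \<in> {1..K}" and e: "colf i = colf j"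
    show "i = j"
    proof (rule ccontr)
      assume ij: "i \<noteq> j"
      let ?w = "fmul (W j) (finv (W i))"
      have zj: "z j = act ?w (z i)" by (simp add: z_def act_act fmul_assoc)
      have ev: "even (rlen ?w)" using parity1 W[OF i] W[OF j] by blast
      have "rlen ?w \<le> rlen (W j) + rlen (W i)" using rlen_fmul[of "W j" "finv (W i)"] by simp
      then have le: "rlen ?w \<le> 2 * N + 10" using W[OF i] W[OF j] by linarith
      have "adj K B N Q (z i, S2) (z j, S2)"
        by (rule edgeB[OF zX zj ev le]) (use kz[OF i] kz[OF j] ij in simp)
      then have "c (z i, S2) \<noteq> c (z j, S2)" using good_adj g[of "W i"] by (simp add: z_def)
      then show False using e by (simp add: colf_def)
    qed
  qed
  have sub: "colf ` {1..K} \<subseteq> {1..K}" using col_in by (auto simp: colf_def)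
  have surj: "colf ` {1..K} = {1..K}"
    by (rule endo_inj_surj[OF _ sub inj]) simp
  show ?thesis
  proof (cases "good (x, S1)")
    case False
    then show ?thesis using sl_L by blast
  next
    case True
    have "c (x, S1) \<in> colf ` {1..K}" using col_in[of "(x, S1)"] surj by simp
    then obtain j where j: "j \<in> {1..K}" "c (x, S1) = colf j" by (rule imageE) simp
    have "kappa K B (z j) \<in> kappa K B ` tset x"
    proof (rule ccontr)
      assume "kappa K B (z j) \<notin> kappa K B ` tset x"
      then have "adj K B N Q (x, S1) (z j, S2)"
        using edgeC[OF x, of "z j" "W j"] W[OF j(1)] by (simp add: z_def)
      then have "c (x, S1) \<noteq> c (z j, S2)" by (rule good_adj[OF True])
      then show False using j(2) unfolding colf_def by simp
    qed
    then obtain t where t: "t \<in> tset x" "kappa K B t = kappa K B (z j)" by (rule imageE) simp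
    from t(1) obtain a where a0: "a \<in> L x" "t = act a x" unfolding tset_L by blast
    have a: "a \<in> L x" "kappa K B (act a x) = j" using a0 t kz[OF j(1)] by simp_all
    let ?y = "act a x"
    have yX: "?y \<in> Xp" using Xp_act[OF xX] .
    have "c (?y, S2) \<in> colf ` {1..K}" using col_in[of "(?y, S2)"] surj by simp
    then obtain i where i: "i \<in> {1..K}" "c (?y, S2) = colf i" by (rule imageE) simp
    have "i = j"
    proof (rule ccontr)
      assume ij: "i \<noteq> j"
      let ?w = "fmul (W i) (finv a)"
      have zi: "z i = act ?w ?y" by (simp add: z_def act_act fmul_assoc)
      have ev: "even (rlen ?w)" using parity1[of "W i" a] W[OF i(1)] L_rlen[OF a(1)] by simp
      have "rlen ?w \<le> rlen (W i) + rlen a" using rlen_fmul[of "W i" "finv a"] by simp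
      then have le: "rlen ?w \<le> 2 * N + 10" using W[OF i(1)] L_rlen[OF a(1)] by linarith
      have "adj K B N Q (?y, S2) (z i, S2)"
        by (rule edgeB[OF yX zi ev le]) (use kz[OF i(1)] a(2) ij in simp)
      then have "c (?y, S2) \<noteq> c (z i, S2)" using good_adj g[of a] by simp
      then show False using i(2) by (simp add: colf_def)
    qed
    then have "c (x, S1) = c (act a x, S2)" using i(2) j(2) by simp
    then show ?thesis using a(1) by blast
  qed
qed

lemma distinct_col:
  assumes x: "x \<in> Xp" and g: "\<And>w. good (act w x, S2)"
    and a: "a \<in> L x" and b: "b \<in> L x" and ab: "a \<noteq> b"
  shows "c (act a x, S2) \<noteq> c (act b x, S2)"
proof -
  let ?g = "fmul b (finv a)"
  have G: "?g \<in> G16" using L_G4[OF a b ab] G4_sub by blast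
  have yX: "act a x \<in> Xp" using Xp_act[OF x] .
  have e: "act b x = act ?g (act a x)" by (simp add: act_act fmul_assoc)
  have ev: "even (rlen ?g)" using parity1[of b a] L_rlen[OF a] L_rlen[OF b] by simp
  have "rlen ?g \<le> rlen b + rlen a" using rlen_fmul[of b "finv a"] by simp
  then have le: "rlen ?g \<le> 2 * N + 10" using L_rlen[OF a] L_rlen[OF b] by simp
  have "adj K B N Q (act a x, S2) (act b x, S2)"
    by (rule edgeB[OF yX e ev le]) (use kappa_G16[OF part yX G] e in simp)
  then show ?thesis using good_adj g[of a] by simp
qed

end

context PBctx begin

lemma AE_good: "\<exists>Nn. Nn \<in> sets mY \<and> emeasure mY Nn = 0 \<and> (\<forall>v. v \<notin> Nn \<longrightarrow> good v)"
proof -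
  have "AE v in completion mY. good v" using sat unfolding satisfies_rule_def good_def .
  then have "AE v in mY. good v" by (simp add: AE_completion_iff)
  then obtain Nn where "{v \<in> space mY. \<not> good v} \<subseteq> Nn" "emeasure mY Nn = 0" "Nn \<in> sets mY"
    by (rule AE_E)
  then show ?thesis by auto
qed

definition sg :: "fg2 \<Rightarrow> bool" where "sg a \<longleftrightarrow> a = T1 \<or> a = T2"

definition AL :: "fg2 set" where "AL = {T1, T2, finv T1, finv T2}"

lemma L_AL: "a \<in> L x \<longleftrightarrow> a \<in> AL \<and> sg a = x fone"
  using AL_distinct by (auto simp: L_def AL_def sg_def)

lemma AL_D0:
  assumes a: "a \<in> AL" and s: "sg a = x fone"
  shows "act a x \<notin> D0"
proof -
  have "a = T1 \<or> a = T2 \<or> a = finv T1 \<or> a = finv T2" using a by (simp add: AL_def)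
  then show ?thesis
  proof (elim disjE)
    assume "a = T1"
    then have "x fone" using s by (simp add: sg_def)
    moreover have "act a x (finv a) = x fone" by (simp add: act_def)
    ultimately show ?thesis using \<open>a = T1\<close> by (simp add: D0_def)
  next
    assume "a = T2"
    then have "x fone" using s by (simp add: sg_def)
    moreover have "act a x (finv a) = x fone" by (simp add: act_def)
    ultimately show ?thesis using \<open>a = T2\<close> by (simp add: D0_def)
  next
    assume "a = finv T1"
    then have "\<not> x fone" using s AL_distinct by (auto simp: sg_def)
    moreover have "act a x T1 = x fone" using \<open>a = finv T1\<close> by (simp add: act_def)
    ultimately show ?thesis by (simp add: D0_def)
  next
    assume "a = finv T2"
    then have "\<not> x fone" using s AL_distinct by (auto simp: sg_def)
    moreover have "act a x T2 = x fone" using \<open>a = finv T2\<close> by (simp add: act_def)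
    ultimately show ?thesis by (simp add: D0_def)
  qed
qed

lemma Yact_Sh: "Yact a ` (A \<times> {s}) = (act a ` A) \<times> {s}"
proof
  show "Yact a ` (A \<times> {s}) \<subseteq> (act a ` A) \<times> {s}" by (auto simp: Yact_def)
  show "(act a ` A) \<times> {s} \<subseteq> Yact a ` (A \<times> {s})"
  proof
    fix p assume "p \<in> (act a ` A) \<times> {s}"
    then obtain x where x: "x \<in> A" "p = (act a x, s)" by blast
    then have "p = Yact a (x, s)" by (simp add: Yact_def)
    then show "p \<in> Yact a ` (A \<times> {s})" using x(1) by blast
  qed
qed

lemma rho_Yact_set:
  "rho ` Yact (finv a) ` ({v. c v = j} \<inter> (UNIV \<times> {S2})) = {x. c (act a x, S2) = j} \<times> {S1}"
proof
  show "rho ` Yact (finv a) ` ({v. c v = j} \<inter> (UNIV \<times> {S2})) \<subseteq> {x. c (act a x, S2) = j} \<times> {S1}"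
  proof
    fix p assume "p \<in> rho ` Yact (finv a) ` ({v. c v = j} \<inter> (UNIV \<times> {S2}))"
    then obtain y where y: "c (y, S2) = j" "p = rho (Yact (finv a) (y, S2))" by blast
    then have "p = (act (finv a) y, S1)" by (simp add: rho_def Yact_def)
    moreover have "act a (act (finv a) y) = y" by (simp add: act_act)
    ultimately show "p \<in> {x. c (act a x, S2) = j} \<times> {S1}" using y(1) by simp
  qed
  show "{x. c (act a x, S2) = j} \<times> {S1} \<subseteq> rho ` Yact (finv a) ` ({v. c v = j} \<inter> (UNIV \<times> {S2}))"
  proof
    fix p assume "p \<in> {x. c (act a x, S2) = j} \<times> {S1}"
    then obtain x where x: "p = (x, S1)" "c (act a x, S2) = j" by blast
    have "rho (Yact (finv a) (act a x, S2)) = (x, S1)"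
      by (simp add: rho_def Yact_def act_act)
    moreover have "(act a x, S2) \<in> {v. c v = j} \<inter> (UNIV \<times> {S2})" using x(2) by simp
    ultimately show "p \<in> rho ` Yact (finv a) ` ({v. c v = j} \<inter> (UNIV \<times> {S2}))"
      using x(1) by (metis image_eqI)
  qed
qed

lemma match_Bs: "{x. c (x, S1) = c (act a x, S2)} \<times> {S1} \<in> Bs"
proof -
  interpret algebra UNIV Bs by (rule fa_alg[OF fa])
  have S1B: "UNIV \<times> {S1} \<in> Bs" and S2B: "UNIV \<times> {S2} \<in> Bs"
    using fa_sets[OF fa Sh_sets[of UNIV]] by (simp_all add: sets.top[of mX, simplified])
  have eq: "{x. c (x, S1) = c (act a x, S2)} \<times> {S1} =
    (\<Union>j\<in>{1..K}. ({v. c v = j} \<inter> (UNIV \<times> {S1})) \<inter> rho ` Yact (finv a) ` ({v. c v = j} \<inter> (UNIV \<times> {S2})))"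
    unfolding rho_Yact_set using col_in by auto
  have "\<And>j. ({v. c v = j} \<inter> (UNIV \<times> {S1})) \<inter> rho ` Yact (finv a) ` ({v. c v = j} \<inter> (UNIV \<times> {S2})) \<in> Bs"
  proof -
    fix j
    have "{v. c v = j} \<inter> (UNIV \<times> {S2}) \<in> Bs" using cls S2B by blast
    then have "Yact (finv a) ` ({v. c v = j} \<inter> (UNIV \<times> {S2})) \<in> Bs" using fa_Yact[OF fa] by blast
    then have "rho ` Yact (finv a) ` ({v. c v = j} \<inter> (UNIV \<times> {S2})) \<in> Bs" using fa_rho[OF fa] by blast
    moreover have "{v. c v = j} \<inter> (UNIV \<times> {S1}) \<in> Bs" using cls S1B by blast
    ultimately show "({v. c v = j} \<inter> (UNIV \<times> {S1})) \<inter> rho ` Yact (finv a) ` ({v. c v = j} \<inter> (UNIV \<times> {S2})) \<in> Bs"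
      by blast
  qed
  then show ?thesis unfolding eq by (intro finite_UN) auto
qed

end

lemma compl_mX: "A \<in> sets mX \<Longrightarrow> UNIV - A \<in> sets mX"
  using sets.compl_sets[of A mX] by simp

context PBctx begin

lemma main_false: False
proof -
  obtain Nn where Nn: "Nn \<in> sets mY" "emeasure mY Nn = 0" "\<And>v. v \<notin> Nn \<Longrightarrow> good v"
    using AE_good by blast
  define N1 where "N1 = {x. (x, S1) \<in> Nn}"
  define N2 where "N2 = {x. (x, S2) \<in> Nn}"
  have N1n: "N1 \<in> null_sets mX" unfolding N1_def by (rule section_null[OF Nn(1,2)])
  have N2n: "N2 \<in> null_sets mX" unfolding N2_def by (rule section_null[OF Nn(1,2)])
  define Bad where "Bad = N1 \<union> (\<Union>w. act w -` N2)"
  have Badn: "Bad \<in> null_sets mX"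
  proof -
    have s: "N2 \<in> sets mX" using N2n by (simp add: null_sets_def)
    have "act w -` N2 \<in> null_sets mX" for w
    proof -
      have "act w -` N2 \<in> sets mX" by (rule act_vimage_sets[OF s])
      moreover have "emeasure mX (act w -` N2) = 0"
        using act_emeasure[OF s, of w] N2n by (simp add: null_sets_def)
      ultimately show ?thesis by (simp add: null_sets_def)
    qed
    then have "(\<Union>w. act w -` N2) \<in> null_sets mX"
      by (intro null_sets_UN') (auto simp: countable_fg2)
    then show ?thesis unfolding Bad_def using N1n by (intro null_sets.Un)
  qed
  have Bads: "Bad \<in> sets mX" using Badn by (simp add: null_sets_def)
  define D where "D = Xp - Q - Bad"
  have DX: "x \<in> Xp - Q" if "x \<in> D" for x using that by (simp add: D_def)
  have g1: "good (x, S1)" if "x \<in> D" for x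
    using that Nn(3)[of "(x, S1)"] by (auto simp: D_def Bad_def N1_def)
  have g2: "good (act w x, S2)" if "x \<in> D" for x w
    using that Nn(3)[of "(act w x, S2)"] by (auto simp: D_def Bad_def N2_def)
  have Ds: "D \<in> sets mX" unfolding D_def using Xp_sets Qmeas Bads by (intro sets.Diff)
  have Dm: "1 - measure mX Q \<le> measure mX D"
  proof -
    have cXs: "UNIV - Xp \<in> sets mX" using Xp_sets by (rule compl_mX)
    have cX: "measure mX (UNIV - Xp) = 0" using PX.prob_compl[OF Xp_sets] Xp_measure by simp
    have "measure mX (UNIV - D) \<le> measure mX ((UNIV - Xp) \<union> Q \<union> Bad)"
      by (rule PX.finite_measure_mono) (auto simp: D_def intro!: sets.Un cXs Qmeas Bads)
    also have "\<dots> \<le> measure mX ((UNIV - Xp) \<union> Q) + measure mX Bad"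
      by (rule measure_Un_le) (auto intro!: sets.Un cXs Qmeas Bads)
    also have "\<dots> \<le> measure mX (UNIV - Xp) + measure mX Q + measure mX Bad"
      using measure_Un_le[OF cXs Qmeas] by simp
    also have "measure mX Bad = 0" using Badn by (simp add: null_sets_def PX.emeasure_eq_measure)
    finally have "measure mX (UNIV - D) \<le> measure mX Q" using cX by simp
    moreover have "measure mX (UNIV - D) = 1 - measure mX D" using PX.prob_compl[OF Ds] by simp
    ultimately show ?thesis by simp
  qed
  have F1: "\<exists>a\<in>L x. c (x, S1) = c (act a x, S2)" if "x \<in> D" for x
    using pigeon[OF DX[OF that] g2[OF that]] g1[OF that] by blast
  define Da where "Da a = {x \<in> D. x fone = sg a \<and> c (x, S1) = c (act a x, S2)}" for a
  have Dcov: "D = (\<Union>a\<in>AL. Da a)"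
  proof
    show "D \<subseteq> (\<Union>a\<in>AL. Da a)"
    proof
      fix x assume x: "x \<in> D"
      then obtain a where a: "a \<in> L x" "c (x, S1) = c (act a x, S2)" using F1 by blast
      then have "a \<in> AL" "sg a = x fone" using L_AL by blast+
      then show "x \<in> (\<Union>a\<in>AL. Da a)" using x a(2) by (auto simp: Da_def)
    qed
    show "(\<Union>a\<in>AL. Da a) \<subseteq> D" by (auto simp: Da_def)
  qed
  have Ddisj: "disjoint_family_on Da AL"
    unfolding disjoint_family_on_def
  proof (intro ballI impI)
    fix a b assume a: "a \<in> AL" and b: "b \<in> AL" and ab: "a \<noteq> b"
    show "Da a \<inter> Da b = {}"
    proof (rule ccontr)
      assume "Da a \<inter> Da b \<noteq> {}"
      then obtain x where xa: "x \<in> Da a" and xb: "x \<in> Da b" by blast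
      have xD: "x \<in> D" using xa by (simp add: Da_def)
      have aL: "a \<in> L x" using xa a L_AL by (simp add: Da_def)
      have bL: "b \<in> L x" using xb b L_AL by (simp add: Da_def)
      have "c (act a x, S2) \<noteq> c (act b x, S2)"
        by (rule distinct_col[OF _ _ aL bL ab]) (use DX[OF xD] g2[OF xD] in auto)
      then show False using xa xb by (simp add: Da_def)
    qed
  qed
  have Idisj: "disjoint_family_on (\<lambda>a. act a ` Da a) AL"
    unfolding disjoint_family_on_def
  proof (intro ballI impI)
    fix a b assume a: "a \<in> AL" and b: "b \<in> AL" and ab: "a \<noteq> b"
    show "act a ` Da a \<inter> act b ` Da b = {}"
    proof (rule ccontr)
      assume "act a ` Da a \<inter> act b ` Da b \<noteq> {}"
      then obtain x y where x: "x \<in> Da a" and y: "y \<in> Da b" and e: "act a x = act b y" by blast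
      have xD: "x \<in> D" using x by (simp add: Da_def)
      have yD: "y \<in> D" using y by (simp add: Da_def)
      show False
      proof (cases "x = y")
        case True
        then show False using Ddisj a b ab x y unfolding disjoint_family_on_def by blast
      next
        case False
        have aL: "a \<in> L x" using x a L_AL by (simp add: Da_def)
        have bL: "b \<in> L y" using y b L_AL by (simp add: Da_def)
        have "act a x \<in> tset x" using aL unfolding tset_L by (rule imageI)
        moreover have "act b y \<in> tset y" using bL unfolding tset_L by (rule imageI)
        ultimately have "act a x \<in> tset x \<inter> tset y" using e by simp
        then have "adj K B N Q (x, S1) (y, S1)"
          by (intro edgeA DX xD yD False) blast
        then have "c (x, S1) \<noteq> c (y, S1)" by (rule good_adj[OF g1[OF xD]])
        moreover have "c (x, S1) = c (act a x, S2)" using x by (simp add: Da_def)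
        moreover have "c (y, S1) = c (act b y, S2)" using y by (simp add: Da_def)
        ultimately show False using e by simp
      qed
    qed
  qed
  have Isub: "act a ` Da a \<subseteq> UNIV - D0" if "a \<in> AL" for a
    using AL_D0[OF that] by (auto simp: Da_def)
  have DaBs: "Da a \<times> {S1} \<in> Bs" for a
  proof -
    interpret algebra UNIV Bs by (rule fa_alg[OF fa])
    have fs: "{x. x fone = sg a} \<in> sets mX"
    proof (cases "sg a")
      case True then show ?thesis using meas_comp_set[of fone] by simp
    next
      case False
      have "{x. x fone = sg a} = UNIV - {x. x fone}" using False by auto
      then show ?thesis using compl_mX[OF meas_comp_set[of fone]] by simp
    qed
    have "Da a \<times> {S1} = (D \<times> {S1}) \<inter> ({x. x fone = sg a} \<times> {S1}) \<inter> ({x. c (x, S1) = c (act a x, S2)} \<times> {S1})"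
      by (auto simp: Da_def)
    moreover have "D \<times> {S1} \<in> Bs" by (rule fa_sets[OF fa Sh_sets[OF Ds]])
    moreover have "{x. x fone = sg a} \<times> {S1} \<in> Bs" by (rule fa_sets[OF fa Sh_sets[OF fs]])
    ultimately show ?thesis using match_Bs[of a] by (simp add: Int)
  qed
  have IBs: "act a ` Da a \<times> {S1} \<in> Bs" for a
    using fa_Yact[OF fa DaBs[of a], of a] by (simp add: Yact_Sh)
  have fin: "finite AL" by (simp add: AL_def)
  have "measure mX D / 2 = mu (D \<times> {S1})"
    using fa_meas[OF fa Sh_sets[OF Ds]] Sh_measure[OF Ds] by simp
  also have "D \<times> {S1} = (\<Union>a\<in>AL. Da a \<times> {S1})" using Dcov by blast
  also have "mu \<dots> = (\<Sum>a\<in>AL. mu (Da a \<times> {S1}))"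
  proof (rule fa_sum[OF fa fin])
    show "\<forall>a\<in>AL. Da a \<times> {S1} \<in> Bs" using DaBs by blast
    show "disjoint_family_on (\<lambda>a. Da a \<times> {S1}) AL"
      using Ddisj unfolding disjoint_family_on_def by blast
  qed
  also have "\<dots> = (\<Sum>a\<in>AL. mu (act a ` Da a \<times> {S1}))"
  proof (rule sum.cong)
    fix a
    show "mu (Da a \<times> {S1}) = mu (act a ` Da a \<times> {S1})"
      using fa_Yact[OF fa DaBs[of a], of a] by (simp add: Yact_Sh)
  qed simp
  also have "\<dots> = mu (\<Union>a\<in>AL. act a ` Da a \<times> {S1})"
  proof (rule fa_sum[OF fa fin, symmetric])
    show "\<forall>a\<in>AL. act a ` Da a \<times> {S1} \<in> Bs" using IBs by blast
    show "disjoint_family_on (\<lambda>a. act a ` Da a \<times> {S1}) AL"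
      using Idisj unfolding disjoint_family_on_def by blast
  qed
  also have "\<dots> \<le> mu ((UNIV - D0) \<times> {S1})"
  proof (rule fa_mono[OF fa])
    interpret algebra UNIV Bs by (rule fa_alg[OF fa])
    show "(\<Union>a\<in>AL. act a ` Da a \<times> {S1}) \<in> Bs" using IBs fin by (intro finite_UN) auto
    have cs: "UNIV - D0 \<in> sets mX" using D0_sets by (rule compl_mX)
    show "(UNIV - D0) \<times> {S1} \<in> Bs" by (rule fa_sets[OF fa Sh_sets[OF cs]])
    show "(\<Union>a\<in>AL. act a ` Da a \<times> {S1}) \<subseteq> (UNIV - D0) \<times> {S1}" using Isub by blast
  qed
  also have "\<dots> = 15 / 32"
  proof -
    have cs: "UNIV - D0 \<in> sets mX" using D0_sets by (rule compl_mX)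
    show ?thesis using fa_meas[OF fa Sh_sets[OF cs]] Sh_measure[OF cs] compl_D0_measure by simp
  qed
  finally have "measure mX D \<le> 15 / 16" by simp
  then show False using Dm Qsmall by simp
qed

end

theorem proposition5:
  fixes K N :: nat and B :: "nat \<Rightarrow> (fg2 \<Rightarrow> bool) set" and Q :: "(fg2 \<Rightarrow> bool) set"
  assumes part: "proper_partition K B"
    and least: "\<forall>k<K. \<not> (\<exists>B'. proper_partition k B')"
    and pos: "\<forall>j\<in>{1..K}. measure mX (B j) > 0"
    and Nodd: "odd N"
    and Qmeas: "Q \<in> sets mX"
    and Qsmall: "measure mX Q < 1 / 512"
    and reach: "\<forall>x\<in>Xp - Q. \<forall>j\<in>{1..K}. \<exists>w. odd (rlen w) \<and> rlen w \<le> N \<and> act w x \<in> B j"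
  shows "paradoxical K (adj K B N Q)"
  unfolding paradoxical_def
proof
  show "\<exists>c. colouring K c \<and> satisfies_rule (adj K B N Q) c" by (rule part_a_exists[OF part])
  show "\<not> (\<exists>Bs mu c. inv_fa_extension Bs mu \<and> colouring K c \<and> satisfies_rule (adj K B N Q) c \<and>
            (\<forall>j. {v. c v = j} \<in> Bs))"
  proof
    assume "\<exists>Bs mu c. inv_fa_extension Bs mu \<and> colouring K c \<and> satisfies_rule (adj K B N Q) c \<and>
            (\<forall>j. {v. c v = j} \<in> Bs)"
    then obtain Bs mu c where h: "inv_fa_extension Bs mu" "colouring K c"
      "satisfies_rule (adj K B N Q) c" "\<forall>j. {v. c v = j} \<in> Bs" by blast
    interpret PBctx K N B Q Bs mu c
      by (rule PBctx.intro) (fact part Qmeas Qsmall reach h)+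
    show False by (rule main_false)
  qed
qed

end
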